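(* For every $k\in\{1,\dots,J\}$ and every $r\in(0,1)$ with $r<r_0$, \[ -\sum_{j=1}^k u_j\alpha_j+\mu_k^{(r)}-\sum_{j=k}^J w_{jk}\,\mu_j^{(r)}\ \ge\ \frac1J(1-w_{kk})\,r^k, \] where $u=u^{(k)}=(w_{1k},\dots,w_{k-1,k},1,0,\dots,0)\in\mathbb{R}_+^J$ (the $k$th entry is $1$, entries after $k$ are $0$).
   Context: $P$ is a substochastic $J\times J$ routing matrix with $I-P$ invertible; $\alpha_j\ge0$; $\lambda=(\lambda_j)$ solves the traffic equations $\lambda_j=\alpha_j+\sum_{\ell=1}^J\lambda_\ell P_{\ell j}$; $\mu_j^{(r)}=\lambda_j+r^j$ for $j=1,\dots,J$. $(w_{jk})$ is the unique solution in $[0,1]^{J\times J}$ of $w_{jk}=P_{jk}+\sum_{\ell=1}^{k-1}P_{j\ell}w_{\ell k}$ (with $w_{kk}<1$), and $r_0=\min_{\{1\le k<j\le J: w_{jk}\ne0\}}((1-w_{kk})/(Jw_{jk}))^{1/(j-k)}$, taken as $1$ if the set is empty. *)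

theory Defs
  imports Complex_Main "Jordan_Normal_Form.Matrix"
begin

(* Indices run over {1..J}; the J x J routing matrix is P :: nat => nat => real,
   with P j l the entry in row j, column l. *)

definition substochastic :: "nat \<Rightarrow> (nat \<Rightarrow> nat \<Rightarrow> real) \<Rightarrow> bool" where
  "substochastic J P \<longleftrightarrow>
     (\<forall>j\<in>{1..J}. \<forall>l\<in>{1..J}. 0 \<le> P j l) \<and>
     (\<forall>j\<in>{1..J}. (\<Sum>l=1..J. P j l) \<le> 1)"

(* the J x J matrix of P (0-based indexing of the library matrix type) *)
definition Pmat :: "nat \<Rightarrow> (nat \<Rightarrow> nat \<Rightarrow> real) \<Rightarrow> real mat" where
  "Pmat J P = mat J J (\<lambda>(i, l). P (i + 1) (l + 1))"

definition mu :: "(nat \<Rightarrow> real) \<Rightarrow> real \<Rightarrow> nat \<Rightarrow> real" where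
  "mu lam r j = lam j + r ^ j"

definition r0 :: "nat \<Rightarrow> (nat \<Rightarrow> nat \<Rightarrow> real) \<Rightarrow> real" where
  "r0 J w =
    (let S = {(k, j). 1 \<le> k \<and> k < j \<and> j \<le> J \<and> w j k \<noteq> 0} in
     if S = {} then 1
     else Min ((\<lambda>(k, j). ((1 - w k k) / (real J * w j k)) powr (1 / real (j - k))) ` S))"

definition uvec :: "(nat \<Rightarrow> nat \<Rightarrow> real) \<Rightarrow> nat \<Rightarrow> nat \<Rightarrow> real" where
  "uvec w k j = (if j < k then w j k else if j = k then 1 else 0)"

end

theory Submission
  imports Defs
begin

theorem mainTheorem8:
  fixes J :: nat and P w :: "nat \<Rightarrow> nat \<Rightarrow> real" and alpha lam :: "nat \<Rightarrow> real"
  assumes J: "1 \<le> J"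
    and sub: "substochastic J P"
    and inv: "invertible_mat (1\<^sub>m J - Pmat J P)"
    and alpha: "\<forall>j\<in>{1..J}. 0 \<le> alpha j"
    and traffic: "\<forall>j\<in>{1..J}. lam j = alpha j + (\<Sum>l=1..J. lam l * P l j)"
    and w_range: "\<forall>j\<in>{1..J}. \<forall>k\<in>{1..J}. 0 \<le> w j k \<and> w j k \<le> 1"
    and w_eq: "\<forall>j\<in>{1..J}. \<forall>k\<in>{1..J}. w j k = P j k + (\<Sum>l=1..<k. P j l * w l k)"
    and w_diag: "\<forall>k\<in>{1..J}. w k k < 1"
    and k: "k \<in> {1..J}"
    and r: "0 < r" "r < 1" "r < r0 J w"
  shows "- (\<Sum>j=1..k. uvec w k j * alpha j) + mu lam r k - (\<Sum>j=k..J. w j k * mu lam r j)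
           \<ge> 1 / real J * (1 - w k k) * r ^ k"
proof -
  have k1: "1 \<le> k" and kJ: "k \<le> J" using k by auto
  have wkk: "w k k < 1" using w_diag k by auto
  have S1: "(\<Sum>j=1..J. lam j * w j k) = (\<Sum>j=1..J. lam j * P j k) + (\<Sum>l=1..<k. w l k * (\<Sum>j=1..J. lam j * P j l))"
  proof -
    have "(\<Sum>j=1..J. lam j * w j k) = (\<Sum>j=1..J. lam j * P j k + (\<Sum>l=1..<k. lam j * P j l * w l k))"
      using w_eq k by (intro sum.cong) (auto simp: algebra_simps sum_distrib_left)
    also have "\<dots> = (\<Sum>j=1..J. lam j * P j k) + (\<Sum>j=1..J. \<Sum>l=1..<k. lam j * P j l * w l k)"
      by (simp add: sum.distrib)
    also have "(\<Sum>j=1..J. \<Sum>l=1..<k. lam j * P j l * w l k) = (\<Sum>l=1..<k. \<Sum>j=1..J. lam j * P j l * w l k)"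
      by (rule sum.swap)
    also have "\<dots> = (\<Sum>l=1..<k. w l k * (\<Sum>j=1..J. lam j * P j l))"
      by (simp add: sum_distrib_left algebra_simps)
    finally show ?thesis .
  qed
  have T1: "(\<Sum>j=1..J. lam j * P j k) = lam k - alpha k" using traffic k by force
  have T2: "(\<Sum>l=1..<k. w l k * (\<Sum>j=1..J. lam j * P j l)) = (\<Sum>l=1..<k. w l k * (lam l - alpha l))"
    using traffic kJ by (intro sum.cong) force+
  have split: "(\<Sum>j=1..J. f j) = (\<Sum>j=1..<k. f j) + (\<Sum>j=k..J. f j)" for f :: "nat \<Rightarrow> real"
  proof -
    have "{1..J} = {1..<k} \<union> {k..J}" using k1 kJ by auto
    thus ?thesis by (simp add: sum.union_disjoint ivl_disj_int)
  qed
  have ident: "(\<Sum>j=k..J. w j k * lam j) = lam k - alpha k - (\<Sum>l=1..<k. w l k * alpha l)"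
  proof -
    have "(\<Sum>j=1..<k. lam j * w j k) + (\<Sum>j=k..J. lam j * w j k) = lam k - alpha k + (\<Sum>l=1..<k. w l k * (lam l - alpha l))"
      using S1 T1 T2 split[of "\<lambda>j. lam j * w j k"] by simp
    thus ?thesis by (simp add: algebra_simps sum_subtractf mult.commute)
  qed
  have U: "(\<Sum>j=1..k. uvec w k j * alpha j) = (\<Sum>l=1..<k. w l k * alpha l) + alpha k"
  proof -
    have "{1..k} = insert k {1..<k}" using k1 by auto
    hence "(\<Sum>j=1..k. uvec w k j * alpha j) = uvec w k k * alpha k + (\<Sum>j=1..<k. uvec w k j * alpha j)"
      by simp
    also have "(\<Sum>j=1..<k. uvec w k j * alpha j) = (\<Sum>l=1..<k. w l k * alpha l)"
      by (intro sum.cong) (auto simp: uvec_def)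
    finally show ?thesis by (simp add: uvec_def)
  qed
  have M: "(\<Sum>j=k..J. w j k * mu lam r j) = (\<Sum>j=k..J. w j k * lam j) + w k k * r ^ k + (\<Sum>j=Suc k..J. w j k * r ^ j)"
  proof -
    have "(\<Sum>j=k..J. w j k * mu lam r j) = (\<Sum>j=k..J. w j k * lam j) + (\<Sum>j=k..J. w j k * r ^ j)"
      by (simp add: mu_def algebra_simps sum.distrib)
    moreover have "(\<Sum>j=k..J. w j k * r ^ j) = w k k * r ^ k + (\<Sum>j=Suc k..J. w j k * r ^ j)"
      using kJ by (simp add: sum.atLeast_Suc_atMost)
    ultimately show ?thesis by simp
  qed
  define c where "c = (1 - w k k) * r ^ k / real J"
  have c0: "0 \<le> c" using wkk r unfolding c_def by simp
  have bound: "w j k * r ^ j \<le> c" if j: "j \<in> {Suc k..J}" for j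
  proof (cases "w j k = 0")
    case True thus ?thesis using c0 by simp
  next
    case False
    have "0 \<le> w j k" using w_range j k by auto
    hence wpos: "0 < w j k" using False by linarith
    let ?S = "{(k, j). 1 \<le> k \<and> k < j \<and> j \<le> J \<and> w j k \<noteq> 0}"
    have mem: "(k, j) \<in> ?S" using j k1 False by auto
    have fin: "finite ?S"
      by (rule finite_subset[of _ "{0..J} \<times> {0..J}"]) auto
    define x where "x = (1 - w k k) / (real J * w j k)"
    have xpos: "0 < x" using wkk wpos J unfolding x_def by simp
    have "r0 J w \<le> x powr (1 / real (j - k))"
    proof -
      let ?f = "(\<lambda>(k, j). ((1 - w k k) / (real J * w j k)) powr (1 / real (j - k)))"
      have ne: "?S \<noteq> {}" using mem by blast
      have "?f (k, j) \<in> ?f ` ?S" using mem by (rule imageI)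
      hence "Min (?f ` ?S) \<le> ?f (k, j)" using fin by (intro Min_le) auto
      moreover have "r0 J w = Min (?f ` ?S)" unfolding r0_def Let_def by (rule if_not_P[OF ne])
      ultimately show ?thesis unfolding x_def by simp
    qed
    hence rlt: "r < x powr (1 / real (j - k))" using r by simp
    have n0: "0 < j - k" using j by auto
    have "r ^ (j - k) = r powr real (j - k)" using r by (simp add: powr_realpow)
    also have "\<dots> < (x powr (1 / real (j - k))) powr real (j - k)"
      using rlt r n0 by (intro powr_less_mono2) auto
    also have "\<dots> = x" using n0 xpos by (simp add: powr_powr)
    finally have "r ^ (j - k) < x" .
    hence "w j k * r ^ (j - k) \<le> w j k * x" using wpos by simp
    also have "w j k * x = (1 - w k k) / real J" using wpos unfolding x_def by simp
    finally have "w j k * r ^ (j - k) * r ^ k \<le> (1 - w k k) / real J * r ^ k"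
      using r by (intro mult_right_mono) auto
    moreover have "r ^ (j - k) * r ^ k = r ^ j" using j by (simp add: power_add[symmetric])
    ultimately show ?thesis unfolding c_def by (simp add: mult.assoc)
  qed
  have sumb: "(\<Sum>j=Suc k..J. w j k * r ^ j) \<le> real (J - k) * c"
  proof -
    have "(\<Sum>j=Suc k..J. w j k * r ^ j) \<le> (\<Sum>j=Suc k..J. c)" by (rule sum_mono) (rule bound)
    thus ?thesis by simp
  qed
  have "real (J - k) * c \<le> real (J - 1) * c" using c0 k1 kJ by (intro mult_right_mono) auto
  hence sumb2: "(\<Sum>j=Suc k..J. w j k * r ^ j) \<le> real (J - 1) * c" using sumb by linarith
  have Jc: "real J * c = (1 - w k k) * r ^ k" unfolding c_def using J by simp
  have LHS: "- (\<Sum>j=1..k. uvec w k j * alpha j) + mu lam r k - (\<Sum>j=k..J. w j k * mu lam r j)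
      = (1 - w k k) * r ^ k - (\<Sum>j=Suc k..J. w j k * r ^ j)"
    using U M ident by (simp add: mu_def algebra_simps)
  have "real (J - 1) = real J - 1" using J by simp
  hence "(1 - w k k) * r ^ k - (\<Sum>j=Suc k..J. w j k * r ^ j) \<ge> c"
    using sumb2 Jc by (simp add: algebra_simps)
  thus ?thesis using LHS unfolding c_def by simp
qed

end
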